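(* Let $N\ge 4$ be even and let $P_1,\dots,P_N$ be an $N$-periodic billiard trajectory in $E$, with outer polygon $P_1',\dots,P_N'$. For $j=1,2$ let $\bar Q'_{j,i}$ be the foot of the perpendicular from $f_j$ to the line $P_i'P_{i+1}'$, and let $\bar A_j'$ be the signed area of the polygon $\bar Q'_{j,1},\dots,\bar Q'_{j,N}$. Then $\bar A_1'=\bar A_2'$, i.e. $\bar A_1'/\bar A_2'=1$.
   Context: Let $E$ be the ellipse $x^2/a^2+y^2/b^2=1$ with $a>b>0$, center $O=(0,0)$ and foci $f_1=(-\sqrt{a^2-b^2},0)$, $f_2=(\sqrt{a^2-b^2},0)$. An $N$-periodic billiard trajectory is a convex polygon with vertices $P_1,\dots,P_N\in E$ (indices mod $N$), listed counterclockwise and winding once around $O$, with $P_i\neq P_{i+1}$, such that at every vertex $P_i$ the normal line to $E$ at $P_i$ bisects the angle $\angle P_{i-1}P_iP_{i+1}$, and all of whose sides are tangent to a common ellipse confocal with $E$. Its outer polygon has vertices $P_i'$ = intersection of the tangent lines to $E$ at $P_i$ and at $P_{i+1}$. The signed area of a polygon with vertices $W_i=(x_i,y_i)$, $i=1,\dots,N$ (indices mod $N$), is $S=\tfrac12\sum_{i=1}^N (x_iy_{i+1}-x_{i+1}y_i)$. *)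

theory Defs
  imports "HOL-Analysis.Analysis"
begin

type_synonym pt = "real \<times> real"

definition cross2 :: "pt \<Rightarrow> pt \<Rightarrow> real" where
  "cross2 u v = fst u * snd v - snd u * fst v"

definition on_ellipse :: "real \<Rightarrow> real \<Rightarrow> pt \<Rightarrow> bool" where
  "on_ellipse A B p \<longleftrightarrow> (fst p)^2 / A + (snd p)^2 / B = 1"

definition focus1 :: "real \<Rightarrow> real \<Rightarrow> pt" where
  "focus1 a b = (- sqrt (a^2 - b^2), 0)"
definition focus2 :: "real \<Rightarrow> real \<Rightarrow> pt" where
  "focus2 a b = (sqrt (a^2 - b^2), 0)"

definition ell_normal :: "real \<Rightarrow> real \<Rightarrow> pt \<Rightarrow> pt" where
  "ell_normal a b p = (fst p / a^2, snd p / b^2)"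

text \<open>The normal line to E at P bisects the angle Q P R: the (internal) bisector
  direction, the sum of the unit vectors from P towards Q and R, is parallel to the normal.\<close>
definition normal_bisects :: "real \<Rightarrow> real \<Rightarrow> pt \<Rightarrow> pt \<Rightarrow> pt \<Rightarrow> bool" where
  "normal_bisects a b Q P R \<longleftrightarrow>
     cross2 (ell_normal a b P)
       ((1 / norm (Q - P)) *\<^sub>R (Q - P) + (1 / norm (R - P)) *\<^sub>R (R - P)) = 0"

text \<open>The line through distinct points p, q is tangent to the ellipse x^2/A + y^2/B = 1
  (A, B > 0): writing it as u x + v y = w, the tangency condition is A u^2 + B v^2 = w^2.\<close>
definition line_tangent_ellipse :: "real \<Rightarrow> real \<Rightarrow> pt \<Rightarrow> pt \<Rightarrow> bool" where
  "line_tangent_ellipse A B p q \<longleftrightarrow>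
     (let u = snd q - snd p; v = fst p - fst q; w = u * fst p + v * snd p
      in A * u^2 + B * v^2 = w^2)"

definition on_tangent_line :: "real \<Rightarrow> real \<Rightarrow> pt \<Rightarrow> pt \<Rightarrow> bool" where
  "on_tangent_line a b p X \<longleftrightarrow> fst X * fst p / a^2 + snd X * snd p / b^2 = 1"

text \<open>N-periodic billiard trajectory P 0, ..., P (N-1) (indices mod N, encoded by
  N-periodicity of P).  Counterclockwise order winding once around O is expressed by
  eccentric angles t i strictly increasing with t (i+N) = t i + 2 pi.\<close>
definition periodic_billiard :: "real \<Rightarrow> real \<Rightarrow> nat \<Rightarrow> (nat \<Rightarrow> pt) \<Rightarrow> bool" where
  "periodic_billiard a b N P \<longleftrightarrow>
     (\<forall>i. P (i + N) = P i) \<and>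
     (\<forall>i. on_ellipse (a^2) (b^2) (P i)) \<and>
     (\<forall>i. P (Suc i) \<noteq> P i) \<and>
     (\<exists>t :: nat \<Rightarrow> real. (\<forall>i. P i = (a * cos (t i), b * sin (t i))) \<and>
          (\<forall>i. t i < t (Suc i)) \<and> (\<forall>i. t (i + N) = t i + 2 * pi)) \<and>
     (\<forall>i. cross2 (P (Suc i) - P i) (P (Suc (Suc i)) - P (Suc i)) > 0) \<and>
     (\<forall>i. normal_bisects a b (P i) (P (Suc i)) (P (Suc (Suc i)))) \<and>
     (\<exists>A B. A > 0 \<and> B > 0 \<and> A - B = a^2 - b^2 \<and>
          (\<forall>i. line_tangent_ellipse A B (P i) (P (Suc i))))"

definition foot :: "pt \<Rightarrow> pt \<Rightarrow> pt \<Rightarrow> pt" where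
  "foot f p q = p + ((inner (f - p) (q - p)) / (norm (q - p))^2) *\<^sub>R (q - p)"

definition signed_area :: "nat \<Rightarrow> (nat \<Rightarrow> pt) \<Rightarrow> real" where
  "signed_area N W = (1/2) * (\<Sum>i<N. fst (W i) * snd (W (Suc i)) - fst (W (Suc i)) * snd (W i))"

end

theory Submission
  imports Defs
begin


definition GG :: "real \<Rightarrow> real \<Rightarrow> real \<Rightarrow> real" where
  "GG p q m = p*(cos m)^2 + q*(sin m)^2"
definition DD :: "real \<Rightarrow> real \<Rightarrow> real \<Rightarrow> real" where
  "DD p q m = arccos (sqrt (GG p q m))"

lemma GG_bounds:
  assumes "0<p" "p<1" "0<q" "q<1"
  shows "0 < GG p q m \<and> GG p q m < 1"
proof -
  have cs: "(cos m)^2 + (sin m)^2 = 1" by simp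
  have "min p q * (cos m)^2 \<le> p*(cos m)^2" by (intro mult_right_mono) auto
  moreover have "min p q * (sin m)^2 \<le> q*(sin m)^2" by (intro mult_right_mono) auto
  moreover have "p*(cos m)^2 \<le> max p q * (cos m)^2" by (intro mult_right_mono) auto
  moreover have "q*(sin m)^2 \<le> max p q * (sin m)^2" by (intro mult_right_mono) auto
  moreover have "min p q * (cos m)^2 + min p q * (sin m)^2 = min p q"
    using cs by (metis distrib_left mult.right_neutral)
  moreover have "max p q * (cos m)^2 + max p q * (sin m)^2 = max p q"
    using cs by (metis distrib_left mult.right_neutral)
  moreover have "0 < min p q" "max p q < 1" using assms by auto
  ultimately show ?thesis unfolding GG_def by linarith
qed

lemma GG_per: "GG p q (m + pi) = GG p q m"
  by (simp add: GG_def)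

lemma DD_per: "DD p q (m + pi) = DD p q m"
  by (simp add: DD_def GG_per)

lemma DD_range:
  assumes "0<p" "p<1" "0<q" "q<1"
  shows "0 < DD p q m \<and> DD p q m < pi/2"
proof -
  from GG_bounds[OF assms] have g: "0 < GG p q m" "GG p q m < 1" by auto
  hence s: "0 < sqrt (GG p q m)" "sqrt (GG p q m) < 1" by (auto simp: real_sqrt_lt_1_iff)
  have "arccos 1 < arccos (sqrt (GG p q m))"
    using s by (intro arccos_less_arccos) linarith+
  moreover have "arccos (sqrt (GG p q m)) < arccos 0"
    using s by (intro arccos_less_arccos) linarith+
  ultimately show ?thesis unfolding DD_def by simp
qed

definition Dd :: "real \<Rightarrow> real \<Rightarrow> real \<Rightarrow> real" where
  "Dd p q m = - (2*(q-p) * sin m*cos m) / (2 * sqrt (GG p q m) * sqrt (1 - GG p q m))"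

lemma DD_deriv:
  assumes "0<p" "p<1" "0<q" "q<1"
  shows "(DD p q has_real_derivative Dd p q m) (at m)"
proof -
  from GG_bounds[OF assms] have g: "0 < GG p q m" "GG p q m < 1" by auto
  hence s: "0 < sqrt (GG p q m)" "sqrt (GG p q m) < 1" by (auto simp: real_sqrt_lt_1_iff)
  have dG: "(GG p q has_real_derivative (2*(q-p) * sin m*cos m)) (at m)"
    unfolding GG_def[abs_def]
    by (auto intro!: derivative_eq_intros simp: algebra_simps)
  have dS: "((\<lambda>x. sqrt (GG p q x)) has_real_derivative (inverse (sqrt (GG p q m)) / 2 * (2*(q-p) * sin m*cos m))) (at m)"
    using DERIV_chain2[OF DERIV_real_sqrt[OF g(1)] dG] .
  have dA: "DERIV arccos (sqrt (GG p q m)) :> inverse (- sqrt (1 - (sqrt (GG p q m))\<^sup>2))"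
    using s by (intro DERIV_arccos) linarith+
  have "(DD p q has_real_derivative (inverse (- sqrt (1 - (sqrt (GG p q m))\<^sup>2)) * (inverse (sqrt (GG p q m)) / 2 * (2*(q-p) * sin m*cos m)))) (at m)"
    unfolding DD_def[abs_def] using DERIV_chain2[OF dA dS] .
  moreover have "inverse (- sqrt (1 - (sqrt (GG p q m))\<^sup>2)) * (inverse (sqrt (GG p q m)) / 2 * (2*(q-p) * sin m*cos m)) = Dd p q m"
  proof -
    have e: "(sqrt (GG p q m))\<^sup>2 = GG p q m" using g by simp
    show ?thesis unfolding e Dd_def using g by (simp add: inverse_eq_divide)
  qed
  ultimately show ?thesis by simp
qed

lemma Dd_bound:
  assumes "0<p" "p<1" "0<q" "q<1"
  shows "\<bar>Dd p q m\<bar> < 1"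
proof -
  from GG_bounds[OF assms] have g: "0 < GG p q m" "GG p q m < 1" by auto
  define c where "c = cos m"
  define s where "s = sin m"
  have cs: "c^2 + s^2 = 1" unfolding c_def s_def by simp
  have G: "GG p q m = p*c^2+q * s^2" unfolding GG_def c_def s_def by simp
  have key: "GG p q m * (1 - GG p q m) - ((q-p) * s*c)^2 = p*(1-p)*c^2 + q*(1-q) * s^2"
  proof -
    have "1 - GG p q m = (1-p)*c^2 + (1-q) * s^2" using G cs by (simp add: algebra_simps)
    hence "GG p q m * (1 - GG p q m) - ((q-p) * s*c)^2 = (p*c^2+q * s^2)*((1-p)*c^2 + (1-q) * s^2) - ((q-p) * s*c)^2"
      using G by simp
    also have "\<dots> = (p*(1-p)*c^2 + q*(1-q) * s^2)*(c^2+s^2)" by (simp add: algebra_simps power2_eq_square)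
    finally show ?thesis using cs by simp
  qed
  have pos: "0 < p*(1-p)*c^2 + q*(1-q) * s^2"
  proof (cases "c = 0")
    case True then have "s^2 = 1" using cs by simp
    then show ?thesis using True assms by simp
  next
    case False then have "0 < c^2" by simp
    moreover have "0 \<le> q*(1-q) * s^2" using assms by simp
    ultimately show ?thesis using assms by (simp add: add_pos_nonneg)
  qed
  have lt: "((q-p) * s*c)^2 < (sqrt (GG p q m) * sqrt (1 - GG p q m))^2"
  proof -
    have "(sqrt (GG p q m) * sqrt (1 - GG p q m))^2 = GG p q m * (1 - GG p q m)"
      using g by (simp add: power_mult_distrib)
    thus ?thesis using key pos by linarith
  qed
  have "\<bar>(q-p) * s*c\<bar> < sqrt (GG p q m) * sqrt (1 - GG p q m)"
  proof (rule power2_less_imp_less)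
    show "\<bar>(q - p) * s * c\<bar>\<^sup>2 < (sqrt (GG p q m) * sqrt (1 - GG p q m))\<^sup>2" using lt by simp
  qed (use g in simp)
  moreover have "0 < sqrt (GG p q m) * sqrt (1 - GG p q m)" using g by simp
  moreover have "Dd p q m = - ((q-p) * s * c) / (sqrt (GG p q m) * sqrt (1 - GG p q m))"
    unfolding Dd_def c_def s_def
    by (simp only: mult.assoc mult_divide_mult_cancel_left_if minus_divide_left) simp
  ultimately show ?thesis by (simp add: abs_divide)
qed

lemma alpha_mono:
  assumes "0<p" "p<1" "0<q" "q<1"
  shows "strict_mono (\<lambda>m. m - DD p q m)"
proof (rule strict_monoI)
  fix x y :: real assume "x < y"
  show "x - DD p q x < y - DD p q y"
  proof (rule DERIV_pos_imp_increasing[OF \<open>x<y\<close>])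
    fix z :: real
    have "((\<lambda>m. m - DD p q m) has_real_derivative 1 - Dd p q z) (at z)"
      using DERIV_diff[OF DERIV_ident DD_deriv[OF assms]] by simp
    moreover have "1 - Dd p q z > 0" using Dd_bound[OF assms, of z] by simp
    ultimately show "\<exists>y. ((\<lambda>m. m - DD p q m) has_real_derivative y) (at z) \<and> 0 < y" by blast
  qed
qed

lemma beta_mono:
  assumes "0<p" "p<1" "0<q" "q<1"
  shows "strict_mono (\<lambda>m. m + DD p q m)"
proof (rule strict_monoI)
  fix x y :: real assume "x < y"
  show "x + DD p q x < y + DD p q y"
  proof (rule DERIV_pos_imp_increasing[OF \<open>x<y\<close>])
    fix z :: real
    have "((\<lambda>m. m + DD p q m) has_real_derivative 1 + Dd p q z) (at z)"
      using DERIV_add[OF DERIV_ident DD_deriv[OF assms]] by simp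
    moreover have "1 + Dd p q z > 0" using Dd_bound[OF assms, of z] by simp
    ultimately show "\<exists>y. ((\<lambda>m. m + DD p q m) has_real_derivative y) (at z) \<and> 0 < y" by blast
  qed
qed



lemma tang_eq:
  assumes "a > 0" "b > 0" "sin d \<noteq> 0"
    and "line_tangent_ellipse A B (a*cos (m-d), b * sin (m-d)) (a*cos (m+d), b * sin (m+d))"
  shows "A/a^2 * (cos m)^2 + B/b^2 * (sin m)^2 = (cos d)^2"
proof -
  have pyth: "(cos m)^2 + (sin m)^2 = 1" by simp
  have u: "b * sin (m+d) - b * sin (m-d) = 2*b*cos m * sin d" by (simp add: sin_add sin_diff algebra_simps)
  have v: "a*cos (m-d) - a*cos (m+d) = 2*a * sin m * sin d" by (simp add: cos_add cos_diff algebra_simps)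
  have w: "(2*b*cos m * sin d) * (a*cos (m-d)) + (2*a * sin m * sin d) * (b * sin (m-d)) = 2*a*b * sin d*cos d"
  proof -
    show ?thesis unfolding cos_diff sin_diff using pyth by algebra
  qed
  from assms(4) have "A*(2*b*cos m * sin d)^2 + B*(2*a * sin m * sin d)^2 = (2*a*b * sin d*cos d)^2"
    unfolding line_tangent_ellipse_def Let_def using u v w by simp
  hence "(4*(sin d)^2) * (A*b^2*(cos m)^2 + B*a^2*(sin m)^2) = (4*(sin d)^2) * (a^2*b^2*(cos d)^2)"
    by (simp add: power_mult_distrib algebra_simps)
  hence "A*b^2*(cos m)^2 + B*a^2*(sin m)^2 = a^2*b^2*(cos d)^2"
    using assms(3) by simp
  thus ?thesis using assms(1,2) by (simp add: field_simps)
qed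

lemma tangent_unique:
  fixes a b s t :: real and X Y :: "real \<times> real"
  assumes "a > 0" "b > 0" "sin (s - t) \<noteq> 0"
    and "on_tangent_line a b (a*cos t, b * sin t) X" "on_tangent_line a b (a*cos s, b * sin s) X"
    and "on_tangent_line a b (a*cos t, b * sin t) Y" "on_tangent_line a b (a*cos s, b * sin s) Y"
  shows "X = Y"
proof -
  have r1: "x*(a*c)/a^2 = x/a*c" for x c using assms(1) by (simp add: power2_eq_square)
  have r2: "x*(b*c)/b^2 = x/b*c" for x c using assms(2) by (simp add: power2_eq_square)
  define u where "u = fst X / a - fst Y / a"
  define v where "v = snd X / b - snd Y / b"
  have h1: "u * cos t + v * sin t = 0" using assms(4,6) unfolding on_tangent_line_def fst_conv snd_conv r1 r2 u_def v_def
    by (simp add: algebra_simps)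
  have h2: "u * cos s + v * sin s = 0" using assms(5,7) unfolding on_tangent_line_def fst_conv snd_conv r1 r2 u_def v_def
    by (simp add: algebra_simps)
  have "u * sin (s - t) = sin s * (u * cos t) - sin t * (u * cos s)" by (simp add: sin_diff algebra_simps)
  also have "\<dots> = sin s * (- (v * sin t)) - sin t * (- (v * sin s))"
  proof -
    have c1: "u * cos t = - (v * sin t)" and c2: "u * cos s = - (v * sin s)" using h1 h2 by linarith+
    show ?thesis by (simp only: c1 c2)
  qed
  also have "\<dots> = 0" by simp
  finally have u0: "u = 0" using assms(3) by simp
  have "v * sin (s - t) = cos t * (v * sin s) - cos s * (v * sin t)" by (simp add: sin_diff algebra_simps)
  also have "\<dots> = cos t * (- (u * cos s)) - cos s * (- (u * cos t))"
  proof -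
    have c1: "v * sin t = - (u * cos t)" and c2: "v * sin s = - (u * cos s)" using h1 h2 by linarith+
    show ?thesis by (simp only: c1 c2)
  qed
  also have "\<dots> = 0" by simp
  finally have v0: "v = 0" using assms(3) by simp
  have "fst X = fst Y" using u0 assms(1) unfolding u_def by (simp add: field_simps)
  moreover have "snd X = snd Y" using v0 assms(2) unfolding v_def by (simp add: field_simps)
  ultimately show ?thesis by (simp add: prod_eq_iff)
qed

lemma foot_neg: "foot (-f) (-p) (-q) = - foot f p q"
proof -
  have "-q - -p = -(q-p)" by simp
  thus ?thesis unfolding foot_def by (simp add: inner_minus_left inner_minus_right norm_minus_commute algebra_simps)
qed

lemma focus_neg: "focus1 a b = - focus2 a b"
  by (simp add: focus1_def focus2_def)

lemma sum_shift_periodic: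
  fixes h :: "nat \<Rightarrow> real"
  assumes "\<And>i. h (i+N) = h i"
  shows "(\<Sum>i<N. h (i+K)) = (\<Sum>i<N. h i)"
proof (induction K)
  case 0 then show ?case by simp
next
  case (Suc K)
  define g where "g i = h (i+K)" for i
  have "(\<Sum>i<Suc N. g i) = g 0 + (\<Sum>i<N. g (Suc i))" by (rule sum.lessThan_Suc_shift)
  moreover have "(\<Sum>i<Suc N. g i) = (\<Sum>i<N. g i) + g N" by simp
  moreover have "g N = g 0" unfolding g_def using assms[of K] by (simp add: add.commute)
  ultimately have "(\<Sum>i<N. g (Suc i)) = (\<Sum>i<N. g i)" by simp
  then show ?case using Suc unfolding g_def by simp
qed



theorem mainTheorem3:
  fixes a b :: real and N :: nat and P P' :: "nat \<Rightarrow> real \<times> real"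
  assumes "a > b" and "b > 0"
    and "N \<ge> 4" and "even N"
    and "periodic_billiard a b N P"
    and "\<forall>i. on_tangent_line a b (P i) (P' i) \<and> on_tangent_line a b (P (Suc i)) (P' i)"
  shows "signed_area N (\<lambda>i. foot (focus1 a b) (P' i) (P' (Suc i)))
       = signed_area N (\<lambda>i. foot (focus2 a b) (P' i) (P' (Suc i)))"
proof -
  have a0: "a > 0" using assms(1,2) by simp
  from assms(5) obtain t A B where
    Pt: "\<forall>i. P i = (a * cos (t i), b * sin (t i))" and tinc: "\<forall>i. t i < t (Suc i)"
    and tper: "\<forall>i. t (i + N) = t i + 2 * pi"
    and AB: "A > 0" "B > 0" "A - B = a^2 - b^2"
    and tang: "\<forall>i. line_tangent_ellipse A B (P i) (P (Suc i))"
    unfolding periodic_billiard_def by blast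
  have tmono: "strict_mono t" using tinc by (simp add: strict_mono_Suc_iff)
  have t1: "t (Suc i) < t i + 2*pi" for i
  proof -
    have "t (Suc i) < t (i + N)" using tmono assms(3) by (simp add: strict_mono_less)
    thus ?thesis using tper by simp
  qed
  have t2: "t (Suc (Suc i)) < t i + 2*pi" for i
  proof -
    have "t (Suc (Suc i)) < t (i + N)" using tmono assms(3) by (simp add: strict_mono_less)
    thus ?thesis using tper by simp
  qed
  define m where "m i = (t i + t (Suc i))/2" for i
  define d where "d i = (t (Suc i) - t i)/2" for i
  have tm: "t i = m i - d i" "t (Suc i) = m i + d i" for i unfolding m_def d_def by (simp_all add: field_simps)
  have d0: "0 < d i" "d i < pi" for i using tinc t1[of i] unfolding d_def by auto
  have sd: "sin (d i) > 0" for i using d0[of i] by (simp add: sin_gt_zero)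
  define p where "p = A/a^2"
  define q where "q = B/b^2"
  have eq: "p * (cos (m i))^2 + q * (sin (m i))^2 = (cos (d i))^2" for i
  proof -
    have "line_tangent_ellipse A B (a*cos (m i - d i), b * sin (m i - d i)) (a*cos (m i + d i), b * sin (m i + d i))"
      using tang Pt tm[of i] by metis
    from tang_eq[OF a0 assms(2) _ this] sd[of i] show ?thesis unfolding p_def q_def by simp
  qed
  define lam where "lam = a^2 - A"
  have Alam: "A = a^2 - lam" and Blam: "B = b^2 - lam" using AB(3) unfolding lam_def by simp_all
  have lam0: "lam > 0"
  proof (rule ccontr)
    assume "\<not> lam > 0"
    hence "p \<ge> 1" "q \<ge> 1" unfolding p_def q_def Alam Blam using a0 assms(2)
      by (auto simp: field_simps)
    hence "p * (cos (m 0))^2 + q * (sin (m 0))^2 \<ge> 1 * (cos (m 0))^2 + 1 * (sin (m 0))^2"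
      by (intro add_mono mult_right_mono) auto
    hence "(cos (d 0))^2 \<ge> 1" using eq[of 0] by simp
    moreover have "(sin (d 0))^2 > 0" using sd[of 0] by simp
    moreover have "(sin (d 0))^2 + (cos (d 0))^2 = 1" by simp
    ultimately show False by linarith
  qed
  have pq: "0 < p" "p < 1" "0 < q" "q < 1"
    unfolding p_def q_def using AB lam0 a0 assms(2) Alam Blam by (auto simp: field_simps)
  define D where "D = DD p q"
  have Dper: "D (x + pi) = D x" for x unfolding D_def by (rule DD_per)
  have Drange: "0 < D x" "D x < pi/2" for x unfolding D_def using DD_range[OF pq] by auto
  have amono: "strict_mono (\<lambda>x. x - D x)" unfolding D_def by (rule alpha_mono[OF pq])
  have bmono: "strict_mono (\<lambda>x. x + D x)" unfolding D_def by (rule beta_mono[OF pq])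
  have dcases: "d i = D (m i) \<or> d i = pi - D (m i)" for i
  proof -
    have G: "GG p q (m i) = (cos (d i))^2" using eq[of i] unfolding GG_def by simp
    have sq: "sqrt (GG p q (m i)) = \<bar>cos (d i)\<bar>" unfolding G by simp
    show ?thesis
    proof (cases "cos (d i) \<ge> 0")
      case True
      then have "D (m i) = arccos (cos (d i))" unfolding D_def DD_def sq by simp
      also have "\<dots> = d i" using d0[of i] by (intro arccos_cos) auto
      finally show ?thesis by simp
    next
      case False
      then have "D (m i) = arccos (cos (pi - d i))" unfolding D_def DD_def sq by simp
      also have "\<dots> = pi - d i" using d0[of i] by (intro arccos_cos) auto
      finally show ?thesis by simp
    qed
  qed
  have dD: "d i = D (m i)" for i
  proof (rule ccontr)
    assume H: "d i \<noteq> D (m i)"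
    hence di: "d i = pi - D (m i)" using dcases by blast
    have tt: "t (Suc (Suc i)) - t i = 2 * (d i + d (Suc i))" unfolding d_def by (simp add: field_simps)
    show False
    proof (cases "d (Suc i) = D (m (Suc i))")
      case False
      hence "d (Suc i) = pi - D (m (Suc i))" using dcases by blast
      hence "t (Suc (Suc i)) - t i > 2*pi" using tt di Drange[of "m i"] Drange[of "m (Suc i)"] by simp
      thus False using t2[of i] by simp
    next
      case True
      have "m (Suc i) - D (m (Suc i)) = (m i + pi) - D (m i + pi)"
        using tm(1)[of "Suc i"] tm(2)[of i] True di Dper[of "m i"] by simp
      hence ms: "m (Suc i) = m i + pi" using strict_mono_eq[OF amono] by blast
      have "t (Suc (Suc i)) = m i + pi + D (m i)" using tm(2)[of "Suc i"] True ms Dper[of "m i"] by simp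
      moreover have "t i = m i - pi + D (m i)" using tm(1)[of i] di by simp
      ultimately show False using t2[of i] by simp
    qed
  qed
  have ta: "t i = m i - D (m i)" "t (Suc i) = m i + D (m i)" for i using tm dD by auto
  have step1: "t (Suc j) < t (Suc k) + pi" if "t j < t k + pi" for j k
  proof -
    have "m j - D (m j) < (m k + pi) - D (m k + pi)" using that ta Dper[of "m k"] by simp
    hence "m j < m k + pi" using strict_mono_less[OF amono] by blast
    hence "m j + D (m j) < (m k + pi) + D (m k + pi)" using strict_mono_less[OF bmono] by blast
    thus ?thesis using ta Dper[of "m k"] by simp
  qed
  have step2: "t (Suc k) + pi < t (Suc j)" if "t k + pi < t j" for j k
  proof -
    have "(m k + pi) - D (m k + pi) < m j - D (m j)" using that ta Dper[of "m k"] by simp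
    hence "m k + pi < m j" using strict_mono_less[OF amono] by blast
    hence "(m k + pi) + D (m k + pi) < m j + D (m j)" using strict_mono_less[OF bmono] by blast
    thus ?thesis using ta Dper[of "m k"] by simp
  qed
  have iter1: "t (j + n) < t (k + n) + pi" if "t j < t k + pi" for j k n
    using that by (induction n) (auto intro: step1)
  have iter2: "t (k + n) + pi < t (j + n)" if "t k + pi < t j" for j k n
    using that by (induction n) (auto intro: step2)
  obtain K where NK: "N = K + K" using assms(4) by (metis evenE mult_2)
  have tsym: "t (i + K) = t i + pi" for i
  proof (rule linorder_cases[of "t (i+K)" "t i + pi"])
    assume "t (i + K) < t i + pi"
    from iter1[OF this, of K] have "t (i + K + K) < t (i + K) + pi" by simp
    moreover have "t (i + K + K) = t i + 2*pi" using tper NK by (metis add.assoc)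
    ultimately show ?thesis using \<open>t (i + K) < t i + pi\<close> by simp
  next
    assume "t i + pi < t (i + K)"
    from iter2[OF this, of K] have "t (i + K) + pi < t (i + K + K)" by simp
    moreover have "t (i + K + K) = t i + 2*pi" using tper NK by (metis add.assoc)
    ultimately show ?thesis using \<open>t i + pi < t (i + K)\<close> by simp
  qed simp
  have sdiff: "sin (t (Suc i) - t i) \<noteq> 0" for i
  proof -
    have "t (Suc i) - t i = 2 * D (m i)" using ta by simp
    moreover have "0 < 2 * D (m i)" "2 * D (m i) < pi" using Drange[of "m i"] by auto
    ultimately have "sin (t (Suc i) - t i) > 0" using sin_gt_zero by metis
    thus ?thesis by simp
  qed
  have tl: "on_tangent_line a b (a*cos (t i), b * sin (t i)) (P' i)"
           "on_tangent_line a b (a*cos (t (Suc i)), b * sin (t (Suc i))) (P' i)" for i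
    using assms(6) Pt by metis+
  have negtl: "on_tangent_line a b (a*cos (t i + pi), b * sin (t i + pi)) (- X)"
    if "on_tangent_line a b (a*cos (t i), b * sin (t i)) X" for i X
    using that unfolding on_tangent_line_def by simp
  have P'sym: "P' (i + K) = - P' i" for i
  proof (rule tangent_unique[OF a0 assms(2) sdiff[of "i+K"]])
    show "on_tangent_line a b (a*cos (t (i+K)), b * sin (t (i+K))) (P' (i+K))" by (rule tl(1))
    show "on_tangent_line a b (a*cos (t (Suc (i+K))), b * sin (t (Suc (i+K)))) (P' (i+K))" by (rule tl(2))
    show "on_tangent_line a b (a*cos (t (i+K)), b * sin (t (i+K))) (- P' i)"
      unfolding tsym by (rule negtl[OF tl(1)])
    have "t (Suc (i+K)) = t (Suc i) + pi" using tsym[of "Suc i"] by simp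
    thus "on_tangent_line a b (a*cos (t (Suc (i+K))), b * sin (t (Suc (i+K)))) (- P' i)"
      using negtl[OF tl(2)[of i]] by simp
  qed
  have P'per: "P' (i + N) = P' i" for i
    using P'sym[of i] P'sym[of "i+K"] NK by (simp add: add.assoc)
  define W where "W i = foot (focus1 a b) (P' i) (P' (Suc i))" for i
  define V where "V i = foot (focus2 a b) (P' i) (P' (Suc i))" for i
  have WV: "W (i + K) = - V i" for i
  proof -
    have "P' (Suc (i+K)) = - P' (Suc i)" using P'sym[of "Suc i"] by simp
    thus ?thesis unfolding W_def V_def focus_neg using P'sym[of i] foot_neg by simp
  qed
  define h where "h i = fst (W i) * snd (W (Suc i)) - fst (W (Suc i)) * snd (W i)" for i
  have hper: "h (i + N) = h i" for i
    unfolding h_def W_def using P'per[of i] P'per[of "Suc i"] P'per[of "Suc (Suc i)"] by simp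
  have hK: "h (i + K) = fst (V i) * snd (V (Suc i)) - fst (V (Suc i)) * snd (V i)" for i
    unfolding h_def using WV[of i] WV[of "Suc i"] by simp
  have "signed_area N W = (1/2) * (\<Sum>i<N. h i)" unfolding signed_area_def h_def by simp
  also have "\<dots> = (1/2) * (\<Sum>i<N. h (i + K))" using sum_shift_periodic[of h N K, OF hper] by simp
  also have "\<dots> = signed_area N V" unfolding signed_area_def hK by simp
  finally show ?thesis unfolding W_def V_def by simp
qed


end
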